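(* Let $P=\bigotimes_{i=1}^n P_i$, $Q=\bigotimes_{i=1}^nQ_i$ be product distributions on $[q]^n$ with $P\ne Q$, $\mathcal C$ a coordinate-wise greedy coupling, $\pi(\omega)=\Pr_{\mathcal C}[X=\omega\mid X\ne Y]$, and $f$ the estimator defined below. Then $$\mathbb E_{\omega\sim\pi}f(\omega)=\frac{d_{TV}(P,Q)}{\Pr_{\mathcal C}[X\ne Y]}=\frac{d_{TV}(P,Q)}{1-\prod_{i=1}^n(1-d_{TV}(P_i,Q_i))},$$ $$\frac1n\le \mathbb E_{\omega\sim\pi}f(\omega)\le 1,$$ and $0\le f(\omega)\le 1$ for every $\omega\in[q]^n$ with $\pi(\omega)>0$.
   Context: $d_{TV}(P,Q)=\frac12\sum_{\omega}|P(\omega)-Q(\omega)|$ (equivalently, the minimum of $\Pr[X\ne Y]$ over all couplings of $P$ and $Q$). A coordinate-wise greedy coupling $\mathcal C$ is a distribution on pairs $(X,Y)$ of the form $\mathcal C=\mathcal C_1\otimes\cdots\otimes\mathcal C_n$, where each $\mathcal C_i$ is a coupling of $P_i$ and $Q_i$ with $\Pr_{\mathcal C_i}[X_i=Y_i=c]=\min\{P_i(c),Q_i(c)\}$ for all $c\in[q]$. The estimator is defined, for $\omega$ with $\Pr_{\mathcal C}[X=\omega\wedge X\ne Y]>0$ (equivalently $\pi(\omega)>0$), by $$f(\omega)=\frac{\max\{0,P(\omega)-Q(\omega)\}}{\Pr_{\mathcal C}[X=\omega\wedge X\neq Y]}.$$ *)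

theory Defs
  imports Main "HOL-Library.FuncSet" Complex_Main
begin

text \<open>The alphabet is [q] = {0..<q}; a point of [q]^n is an extensional
function in PiE {..<n} (\<lambda>_. {..<q}).  Distributions are given by their
probability mass functions.\<close>

definition cube :: "nat \<Rightarrow> nat \<Rightarrow> (nat \<Rightarrow> nat) set" where
  "cube q n = PiE {..<n} (\<lambda>_. {..<q})"

definition is_dist :: "'a set \<Rightarrow> ('a \<Rightarrow> real) \<Rightarrow> bool" where
  "is_dist A p \<longleftrightarrow> (\<forall>x\<in>A. 0 \<le> p x) \<and> sum p A = 1"

definition prod_dist :: "nat \<Rightarrow> (nat \<Rightarrow> nat \<Rightarrow> real) \<Rightarrow> (nat \<Rightarrow> nat) \<Rightarrow> real" where
  "prod_dist n Ps \<omega> = (\<Prod>i<n. Ps i (\<omega> i))"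

definition d_TV :: "'a set \<Rightarrow> ('a \<Rightarrow> real) \<Rightarrow> ('a \<Rightarrow> real) \<Rightarrow> real" where
  "d_TV A p r = (1/2) * (\<Sum>x\<in>A. \<bar>p x - r x\<bar>)"

definition greedy_coupling ::
  "nat \<Rightarrow> (nat \<Rightarrow> real) \<Rightarrow> (nat \<Rightarrow> real) \<Rightarrow> (nat \<Rightarrow> nat \<Rightarrow> real) \<Rightarrow> bool" where
  "greedy_coupling q p r c \<longleftrightarrow>
     (\<forall>a<q. \<forall>b<q. 0 \<le> c a b) \<and>
     (\<forall>a<q. (\<Sum>b<q. c a b) = p a) \<and>
     (\<forall>b<q. (\<Sum>a<q. c a b) = r b) \<and>
     (\<forall>a<q. c a a = min (p a) (r a))"

definition prod_coupling ::
  "nat \<Rightarrow> (nat \<Rightarrow> nat \<Rightarrow> nat \<Rightarrow> real) \<Rightarrow> (nat \<Rightarrow> nat) \<Rightarrow> (nat \<Rightarrow> nat) \<Rightarrow> real" where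
  "prod_coupling n Cs \<omega> \<omega>' = (\<Prod>i<n. Cs i (\<omega> i) (\<omega>' i))"

definition pr_neq :: "nat \<Rightarrow> nat \<Rightarrow> (nat \<Rightarrow> nat \<Rightarrow> nat \<Rightarrow> real) \<Rightarrow> real" where
  "pr_neq q n Cs = (\<Sum>\<omega>\<in>cube q n. \<Sum>\<omega>'\<in>cube q n - {\<omega>}. prod_coupling n Cs \<omega> \<omega>')"

definition pr_at_neq :: "nat \<Rightarrow> nat \<Rightarrow> (nat \<Rightarrow> nat \<Rightarrow> nat \<Rightarrow> real) \<Rightarrow> (nat \<Rightarrow> nat) \<Rightarrow> real" where
  "pr_at_neq q n Cs \<omega> = (\<Sum>\<omega>'\<in>cube q n - {\<omega>}. prod_coupling n Cs \<omega> \<omega>')"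

definition cond_pi :: "nat \<Rightarrow> nat \<Rightarrow> (nat \<Rightarrow> nat \<Rightarrow> nat \<Rightarrow> real) \<Rightarrow> (nat \<Rightarrow> nat) \<Rightarrow> real" where
  "cond_pi q n Cs \<omega> = pr_at_neq q n Cs \<omega> / pr_neq q n Cs"

definition estimator ::
  "nat \<Rightarrow> nat \<Rightarrow> (nat \<Rightarrow> nat \<Rightarrow> real) \<Rightarrow> (nat \<Rightarrow> nat \<Rightarrow> real) \<Rightarrow> (nat \<Rightarrow> nat \<Rightarrow> nat \<Rightarrow> real)
    \<Rightarrow> (nat \<Rightarrow> nat) \<Rightarrow> real" where
  "estimator q n Ps Qs Cs \<omega> =
     max 0 (prod_dist n Ps \<omega> - prod_dist n Qs \<omega>) / pr_at_neq q n Cs \<omega>"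

definition expect_f ::
  "nat \<Rightarrow> nat \<Rightarrow> (nat \<Rightarrow> nat \<Rightarrow> real) \<Rightarrow> (nat \<Rightarrow> nat \<Rightarrow> real) \<Rightarrow> (nat \<Rightarrow> nat \<Rightarrow> nat \<Rightarrow> real) \<Rightarrow> real" where
  "expect_f q n Ps Qs Cs =
     (\<Sum>\<omega>\<in>{\<omega>\<in>cube q n. cond_pi q n Cs \<omega> > 0}. cond_pi q n Cs \<omega> * estimator q n Ps Qs Cs \<omega>)"

end

theory Submission
  imports Defs
begin

lemma cube_sum_prod:
  "(\<Sum>\<omega>\<in>cube q n. \<Prod>i<n. g i (\<omega> i)) = (\<Prod>i<n. \<Sum>a<q. g i a :: real)"
  unfolding cube_def using prod_sum_PiE[of "{..<n}" "\<lambda>_. {..<q}" g] by simp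

lemma finite_cube: "finite (cube q n)" unfolding cube_def by (simp add: finite_PiE)

lemma cube_mem: "\<omega> \<in> cube q n \<Longrightarrow> i < n \<Longrightarrow> \<omega> i < q" unfolding cube_def by auto

lemma pr_at_eq:
  assumes greedy: "\<forall>i<n. greedy_coupling q (Ps i) (Qs i) (Cs i)" and w: "\<omega> \<in> cube q n"
  shows "pr_at_neq q n Cs \<omega> = prod_dist n Ps \<omega> - (\<Prod>i<n. min (Ps i (\<omega> i)) (Qs i (\<omega> i)))"
proof -
  have "pr_at_neq q n Cs \<omega> = (\<Sum>\<omega>'\<in>cube q n. prod_coupling n Cs \<omega> \<omega>') - prod_coupling n Cs \<omega> \<omega>"
    unfolding pr_at_neq_def using w finite_cube by (simp add: sum_diff1)
  also have "(\<Sum>\<omega>'\<in>cube q n. prod_coupling n Cs \<omega> \<omega>') = (\<Prod>i<n. \<Sum>b<q. Cs i (\<omega> i) b)"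
    unfolding prod_coupling_def by (rule cube_sum_prod)
  also have "\<dots> = prod_dist n Ps \<omega>"
    unfolding prod_dist_def using greedy w cube_mem unfolding greedy_coupling_def
    by (intro prod.cong) auto
  also have "prod_coupling n Cs \<omega> \<omega> = (\<Prod>i<n. min (Ps i (\<omega> i)) (Qs i (\<omega> i)))"
    unfolding prod_coupling_def using greedy w cube_mem unfolding greedy_coupling_def
    by (intro prod.cong) auto
  finally show ?thesis .
qed

lemma marginal:
  assumes Psum: "\<And>j. j < n \<Longrightarrow> (\<Sum>a<q. Ps j a) = (1::real)" and i: "i < n" and S: "S \<subseteq> {..<q}"
  shows "(\<Sum>\<omega>\<in>PiE {..<n} ((\<lambda>_. {..<q})(i:=S)). prod_dist n Ps \<omega>) = (\<Sum>a\<in>S. Ps i a)"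
proof -
  have "(\<Sum>\<omega>\<in>PiE {..<n} ((\<lambda>_. {..<q})(i:=S)). prod_dist n Ps \<omega>)
      = (\<Prod>j<n. \<Sum>a\<in>((\<lambda>_. {..<q})(i:=S)) j. Ps j a)"
    unfolding prod_dist_def using S by (intro prod_sum_PiE[symmetric]) (auto simp: finite_subset)
  also have "\<dots> = (\<Sum>a\<in>S. Ps i a) * (\<Prod>j\<in>{..<n}-{i}. \<Sum>a\<in>((\<lambda>_. {..<q})(i:=S)) j. Ps j a)"
    using i by (subst prod.remove[of _ i]) auto
  also have "(\<Prod>j\<in>{..<n}-{i}. \<Sum>a\<in>((\<lambda>_. {..<q})(i:=S)) j. Ps j a) = 1"
    using Psum by (intro prod.neutral) auto
  finally show ?thesis by (metis mult_1_right)
qed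

lemma one_minus_prod_le:
  fixes d :: "nat \<Rightarrow> real"
  assumes "finite I" "\<forall>i\<in>I. 0 \<le> d i \<and> d i \<le> 1"
  shows "1 - (\<Prod>i\<in>I. 1 - d i) \<le> (\<Sum>i\<in>I. d i)"
  using assms
proof (induction I rule: finite_induct)
  case empty
  then show ?case by simp
next
  case (insert x I)
  define p where "p = (\<Prod>i\<in>I. 1 - d i)"
  have p0: "0 \<le> p" unfolding p_def using insert by (intro prod_nonneg) auto
  have p1: "p \<le> 1" unfolding p_def using insert by (intro prod_le_1) auto
  have IH: "1 - p \<le> (\<Sum>i\<in>I. d i)" using insert unfolding p_def by auto
  have dx: "0 \<le> d x" "d x \<le> 1" using insert by auto
  have "d x * p \<le> d x" using p1 dx by (simp add: mult_left_le)
  then have "1 - (1 - d x) * p \<le> d x + (\<Sum>i\<in>I. d i)" using IH by (simp add: algebra_simps)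
  then show ?case using insert unfolding p_def by simp
qed

lemma sum_max0:
  fixes p r :: "'a \<Rightarrow> real"
  assumes "sum p A = 1" "sum r A = 1"
  shows "(\<Sum>x\<in>A. max 0 (p x - r x)) = d_TV A p r"
proof -
  have "(\<Sum>x\<in>A. max 0 (p x - r x)) = (\<Sum>x\<in>A. (p x - r x + \<bar>p x - r x\<bar>) / 2)" by (intro sum.cong) (auto simp: max_def min_def)
  also have "\<dots> = (sum p A - sum r A + (\<Sum>x\<in>A. \<bar>p x - r x\<bar>)) / 2"
    by (simp add: sum_divide_distrib[symmetric] sum.distrib sum_subtractf)
  finally show ?thesis using assms unfolding d_TV_def by simp
qed

lemma sum_min:
  fixes p r :: "'a \<Rightarrow> real"
  assumes "sum p A = 1" "sum r A = 1"
  shows "(\<Sum>x\<in>A. min (p x) (r x)) = 1 - d_TV A p r"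
proof -
  have "(\<Sum>x\<in>A. min (p x) (r x)) = (\<Sum>x\<in>A. (p x + r x - \<bar>p x - r x\<bar>) / 2)" by (intro sum.cong) (auto simp: max_def min_def)
  also have "\<dots> = (sum p A + sum r A - (\<Sum>x\<in>A. \<bar>p x - r x\<bar>)) / 2"
    by (simp add: sum_divide_distrib[symmetric] sum.distrib sum_subtractf)
  finally show ?thesis using assms unfolding d_TV_def by simp
qed

theorem lemma3p3:
  fixes q n :: nat
    and Ps Qs :: "nat \<Rightarrow> nat \<Rightarrow> real"
    and Cs :: "nat \<Rightarrow> nat \<Rightarrow> nat \<Rightarrow> real"
  assumes P_dist: "\<forall>i<n. is_dist {..<q} (Ps i)"
    and Q_dist: "\<forall>i<n. is_dist {..<q} (Qs i)"
    and P_ne_Q: "\<exists>\<omega>\<in>cube q n. prod_dist n Ps \<omega> \<noteq> prod_dist n Qs \<omega>"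
    and greedy: "\<forall>i<n. greedy_coupling q (Ps i) (Qs i) (Cs i)"
  shows "expect_f q n Ps Qs Cs
           = d_TV (cube q n) (prod_dist n Ps) (prod_dist n Qs) / pr_neq q n Cs
       \<and> d_TV (cube q n) (prod_dist n Ps) (prod_dist n Qs) / pr_neq q n Cs
           = d_TV (cube q n) (prod_dist n Ps) (prod_dist n Qs)
             / (1 - (\<Prod>i<n. 1 - d_TV {..<q} (Ps i) (Qs i)))
       \<and> 1 / real n \<le> expect_f q n Ps Qs Cs
       \<and> expect_f q n Ps Qs Cs \<le> 1
       \<and> (\<forall>\<omega>\<in>cube q n. cond_pi q n Cs \<omega> > 0 \<longrightarrow>
             0 \<le> estimator q n Ps Qs Cs \<omega> \<and> estimator q n Ps Qs Cs \<omega> \<le> 1)"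
proof -
  define P where "P = prod_dist n Ps"
  define Q where "Q = prod_dist n Qs"
  define m where "m = (\<lambda>\<omega>. \<Prod>i<n. min (Ps i (\<omega> i)) (Qs i (\<omega> i)))"
  define D where "D = d_TV (cube q n) P Q"
  define d where "d = (\<lambda>i. d_TV {..<q} (Ps i) (Qs i))"
  define Z where "Z = pr_neq q n Cs"
  define A where "A = pr_at_neq q n Cs"
  have Pnn: "\<And>i a. i < n \<Longrightarrow> a < q \<Longrightarrow> 0 \<le> Ps i a" using P_dist unfolding is_dist_def by auto
  have Qnn: "\<And>i a. i < n \<Longrightarrow> a < q \<Longrightarrow> 0 \<le> Qs i a" using Q_dist unfolding is_dist_def by auto
  have Psum: "\<And>i. i < n \<Longrightarrow> (\<Sum>a<q. Ps i a) = 1" using P_dist unfolding is_dist_def by auto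
  have Qsum: "\<And>i. i < n \<Longrightarrow> (\<Sum>a<q. Qs i a) = 1" using Q_dist unfolding is_dist_def by auto
  have PS: "(\<Sum>\<omega>\<in>cube q n. P \<omega>) = 1"
    unfolding P_def prod_dist_def cube_sum_prod using Psum by (intro prod.neutral) auto
  have QS: "(\<Sum>\<omega>\<in>cube q n. Q \<omega>) = 1"
    unfolding Q_def prod_dist_def cube_sum_prod using Qsum by (intro prod.neutral) auto
  have at: "\<And>\<omega>. \<omega> \<in> cube q n \<Longrightarrow> A \<omega> = P \<omega> - m \<omega>"
    unfolding A_def P_def m_def using pr_at_eq greedy by blast
  have mP: "\<And>\<omega>. \<omega> \<in> cube q n \<Longrightarrow> m \<omega> \<le> P \<omega>"
    unfolding m_def P_def prod_dist_def using cube_mem Pnn Qnn by (intro prod_mono) auto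
  have mQ: "\<And>\<omega>. \<omega> \<in> cube q n \<Longrightarrow> m \<omega> \<le> Q \<omega>"
    unfolding m_def Q_def prod_dist_def using cube_mem Pnn Qnn by (intro prod_mono) auto
  have atge: "\<And>\<omega>. \<omega> \<in> cube q n \<Longrightarrow> max 0 (P \<omega> - Q \<omega>) \<le> A \<omega>"
    using at mP mQ by force
  have maxsum: "(\<Sum>\<omega>\<in>cube q n. max 0 (P \<omega> - Q \<omega>)) = D"
    unfolding D_def using PS QS by (rule sum_max0)
  obtain \<omega>0 where w0: "\<omega>0 \<in> cube q n" "P \<omega>0 \<noteq> Q \<omega>0" using P_ne_Q unfolding P_def Q_def by auto
  have "\<bar>P \<omega>0 - Q \<omega>0\<bar> \<le> (\<Sum>\<omega>\<in>cube q n. \<bar>P \<omega> - Q \<omega>\<bar>)"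
    using w0 finite_cube by (intro member_le_sum) auto
  then have Dpos: "D > 0" unfolding D_def d_TV_def using w0 by simp
  have ZA: "Z = (\<Sum>\<omega>\<in>cube q n. A \<omega>)" unfolding Z_def A_def pr_neq_def pr_at_neq_def by simp
  have DZ: "D \<le> Z" unfolding ZA maxsum[symmetric] using atge by (intro sum_mono) auto
  with Dpos have Zpos: "Z > 0" by simp
  have summin: "\<And>i. i < n \<Longrightarrow> (\<Sum>a<q. min (Ps i a) (Qs i a)) = 1 - d i"
    unfolding d_def using Psum Qsum by (intro sum_min) auto
  have Zeq: "Z = 1 - (\<Prod>i<n. 1 - d i)"
  proof -
    have "Z = (\<Sum>\<omega>\<in>cube q n. P \<omega> - m \<omega>)" unfolding ZA using at by (intro sum.cong) auto
    also have "\<dots> = 1 - (\<Sum>\<omega>\<in>cube q n. m \<omega>)" using PS by (simp add: sum_subtractf)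
    also have "(\<Sum>\<omega>\<in>cube q n. m \<omega>) = (\<Prod>i<n. \<Sum>a<q. min (Ps i a) (Qs i a))"
      unfolding m_def by (rule cube_sum_prod)
    also have "\<dots> = (\<Prod>i<n. 1 - d i)" using summin by (intro prod.cong) auto
    finally show ?thesis .
  qed
  have d01: "\<forall>i\<in>{..<n}. 0 \<le> d i \<and> d i \<le> 1"
  proof
    fix i assume i: "i \<in> {..<n}"
    have "0 \<le> (\<Sum>a<q. min (Ps i a) (Qs i a))" using i Pnn Qnn by (intro sum_nonneg) auto
    moreover have "0 \<le> d i" unfolding d_def d_TV_def by (simp add: sum_nonneg)
    ultimately show "0 \<le> d i \<and> d i \<le> 1" using summin[of i] i by auto
  qed
  have dD: "d i \<le> D" if i: "i < n" for i
  proof -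
    define S where "S = {a\<in>{..<q}. Qs i a < Ps i a}"
    define B where "B = PiE {..<n} ((\<lambda>_. {..<q})(i:=S))"
    have S: "S \<subseteq> {..<q}" unfolding S_def by auto
    have BC: "B \<subseteq> cube q n" unfolding B_def cube_def using S by (intro PiE_mono) auto
    have "d i = (\<Sum>a<q. max 0 (Ps i a - Qs i a))" unfolding d_def using Psum Qsum i by (intro sum_max0[symmetric]) auto
    also have "\<dots> = (\<Sum>a\<in>S. Ps i a - Qs i a)" unfolding S_def
      by (subst sum.inter_filter) (auto intro: sum.cong)
    also have "\<dots> = (\<Sum>\<omega>\<in>B. P \<omega>) - (\<Sum>\<omega>\<in>B. Q \<omega>)"
      unfolding B_def P_def Q_def using marginal[OF Psum i S] marginal[OF Qsum i S]
      by (simp add: sum_subtractf)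
    also have "\<dots> = (\<Sum>\<omega>\<in>B. P \<omega> - Q \<omega>)" by (simp add: sum_subtractf)
    also have "\<dots> \<le> (\<Sum>\<omega>\<in>B. max 0 (P \<omega> - Q \<omega>))" by (intro sum_mono) auto
    also have "\<dots> \<le> (\<Sum>\<omega>\<in>cube q n. max 0 (P \<omega> - Q \<omega>))"
      using finite_cube BC by (intro sum_mono2) auto
    finally show ?thesis using maxsum by simp
  qed
  have ZnD: "Z \<le> real n * D"
  proof -
    have "Z \<le> (\<Sum>i<n. d i)" unfolding Zeq using d01 by (intro one_minus_prod_le) auto
    also have "\<dots> \<le> (\<Sum>i<n. D)" using dD by (intro sum_mono) auto
    finally show ?thesis by simp
  qed
  have E: "expect_f q n Ps Qs Cs = D / Z"
  proof -
    have "expect_f q n Ps Qs Cs = (\<Sum>\<omega>\<in>{\<omega>\<in>cube q n. A \<omega> / Z > 0}. A \<omega> / Z * (max 0 (P \<omega> - Q \<omega>) / A \<omega>))"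
      unfolding expect_f_def cond_pi_def estimator_def A_def Z_def P_def Q_def ..
    also have "\<dots> = (\<Sum>\<omega>\<in>{\<omega>\<in>cube q n. A \<omega> / Z > 0}. max 0 (P \<omega> - Q \<omega>) / Z)"
      by (intro sum.cong) auto
    also have "\<dots> = (\<Sum>\<omega>\<in>cube q n. max 0 (P \<omega> - Q \<omega>) / Z)"
    proof (intro sum.mono_neutral_left finite_cube)
      show "{\<omega> \<in> cube q n. 0 < A \<omega> / Z} \<subseteq> cube q n" by auto
      show "\<forall>i\<in>cube q n - {\<omega> \<in> cube q n. 0 < A \<omega> / Z}. max 0 (P i - Q i) / Z = 0"
      proof
        fix w assume w: "w \<in> cube q n - {\<omega> \<in> cube q n. 0 < A \<omega> / Z}"
        then have "A w \<le> 0" using Zpos by (auto simp: divide_pos_pos not_less zero_less_divide_iff)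
        with atge[of w] w have "max 0 (P w - Q w) = 0" by auto
        then show "max 0 (P w - Q w) / Z = 0" by simp
      qed
    qed
    also have "\<dots> = D / Z" using maxsum by (simp add: sum_divide_distrib[symmetric])
    finally show ?thesis .
  qed
  have part5: "\<forall>\<omega>\<in>cube q n. cond_pi q n Cs \<omega> > 0 \<longrightarrow>
             0 \<le> estimator q n Ps Qs Cs \<omega> \<and> estimator q n Ps Qs Cs \<omega> \<le> 1"
  proof (intro ballI impI)
    fix w assume w: "w \<in> cube q n" and c: "cond_pi q n Cs w > 0"
    then have Aw: "A w > 0" using Zpos unfolding cond_pi_def A_def Z_def by (auto simp: zero_less_divide_iff)
    have est: "estimator q n Ps Qs Cs w = max 0 (P w - Q w) / A w"
      unfolding estimator_def P_def Q_def A_def ..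
    show "0 \<le> estimator q n Ps Qs Cs w \<and> estimator q n Ps Qs Cs w \<le> 1"
      unfolding est using Aw atge[OF w] by auto
  qed
  have low: "1 / real n \<le> D / Z"
  proof (cases "n = 0")
    case True then show ?thesis using Dpos Zpos by simp
  next
    case False then show ?thesis using ZnD Zpos Dpos by (simp add: divide_simps mult.commute)
  qed
  have up: "D / Z \<le> 1" using DZ Zpos by simp
  show ?thesis
    using E low up part5 Zeq unfolding D_def P_def Q_def Z_def d_def by simp
qed

end
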